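(* Let $n\geq 2$, $m\geq 1$, $r\geq 2$ be integers and let $\alpha$ be an integer with $1\leq\alpha<(m+1)^n$. Then $\Gamma_n^{\alpha,r}$ is homotopy equivalent to the induced subcomplex of $\Gamma_n^{\alpha,r}$ on the vertex set $\{x\in V(\Gamma_n^{\alpha,r}) : |x_i|\leq\lfloor r/2\rfloor \text{ for all } 1\leq i\leq n\}$.
   Context: $\mathbb{Z}^n$ carries the Manhattan metric $d(x,y)=\sum_i|x_i-y_i|$; for $X\subseteq\mathbb{Z}^n$, $\mathrm{VR}(X;r)$ is the simplicial complex on $X$ whose simplices are finite subsets of diameter at most $r$. Let $\prec$ be the anti-lexicographic order on $\mathbb{Z}^n$: $x\prec y$ iff at the largest index $i$ with $x_i\neq y_i$ one has $x_i<y_i$. Let $V_m=\{0,\ldots,m\}^n$. Let $H$ be $V_m$ with its first $\alpha$ elements (with respect to $\prec$) removed, $\delta$ the $\prec$-least element of $H$, and $Y=\{x-\delta: x\in H\}$ (so $\mathbf{0}=(0,\ldots,0)$ is the least element of $Y$). Then $\Gamma_n^{\alpha,r}$ is the link of $\mathbf{0}$ in $\mathrm{VR}(Y;r)$, i.e. the complex of simplices $\tau$ of $\mathrm{VR}(Y;r)$ with $\mathbf{0}\notin\tau$ and $\tau\cup\{\mathbf{0}\}\in\mathrm{VR}(Y;r)$. For a simplicial complex $K$ and a set $W$ of vertices, the induced subcomplex on $W$ consists of the simplices of $K$ contained in $W$. *)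

theory Defs
  imports "HOL-Analysis.Analysis"
begin

text \<open>Points of Z^n are integer lists of length n; coordinate i (1-based in the paper)
  is the list entry at index i-1.\<close>

definition manh :: "int list \<Rightarrow> int list \<Rightarrow> int" where
  "manh x y = (\<Sum>i<length x. \<bar>x ! i - y ! i\<bar>)"

definition antilex_less :: "int list \<Rightarrow> int list \<Rightarrow> bool" where
  "antilex_less x y \<longleftrightarrow> length x = length y \<and>
     (\<exists>i<length x. x ! i < y ! i \<and> (\<forall>j. i < j \<and> j < length x \<longrightarrow> x ! j = y ! j))"

definition cube :: "nat \<Rightarrow> nat \<Rightarrow> int list set" where
  "cube n m = {x. length x = n \<and> (\<forall>i<n. 0 \<le> x ! i \<and> x ! i \<le> int m)}"

text \<open>Position (0-based) of x in the anti-lex ordering of the cube.\<close>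
definition cube_rank :: "nat \<Rightarrow> nat \<Rightarrow> int list \<Rightarrow> nat" where
  "cube_rank n m x = card {y \<in> cube n m. antilex_less y x}"

definition Hset :: "nat \<Rightarrow> nat \<Rightarrow> nat \<Rightarrow> int list set" where
  "Hset n m \<alpha> = {x \<in> cube n m. \<alpha> \<le> cube_rank n m x}"

definition delta :: "nat \<Rightarrow> nat \<Rightarrow> nat \<Rightarrow> int list" where
  "delta n m \<alpha> = (THE d. d \<in> Hset n m \<alpha> \<and> (\<forall>x \<in> Hset n m \<alpha>. x \<noteq> d \<longrightarrow> antilex_less d x))"

definition Yset :: "nat \<Rightarrow> nat \<Rightarrow> nat \<Rightarrow> int list set" where
  "Yset n m \<alpha> = (\<lambda>x. map2 (-) x (delta n m \<alpha>)) ` Hset n m \<alpha>"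

definition VR :: "int list set \<Rightarrow> int \<Rightarrow> int list set set" where
  "VR X r = {\<tau>. \<tau> \<noteq> {} \<and> finite \<tau> \<and> \<tau> \<subseteq> X \<and> (\<forall>x\<in>\<tau>. \<forall>y\<in>\<tau>. manh x y \<le> r)}"

definition link :: "'a set set \<Rightarrow> 'a \<Rightarrow> 'a set set" where
  "link K v = {\<tau> \<in> K. v \<notin> \<tau> \<and> insert v \<tau> \<in> K}"

definition Gamma :: "nat \<Rightarrow> nat \<Rightarrow> nat \<Rightarrow> int \<Rightarrow> int list set set" where
  "Gamma n m \<alpha> r = link (VR (Yset n m \<alpha>) r) (replicate n 0)"

definition vertices :: "'a set set \<Rightarrow> 'a set" where
  "vertices K = \<Union> K"

definition induced :: "'a set set \<Rightarrow> 'a set \<Rightarrow> 'a set set" where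
  "induced K W = {\<tau> \<in> K. \<tau> \<subseteq> W}"

text \<open>Geometric realization of a (finite) simplicial complex K: barycentric-coordinate functions
  supported on a simplex of K, with the topology induced from the product topology
  (which for finite complexes is the usual topology of the realization).\<close>
definition realization :: "'a set set \<Rightarrow> ('a \<Rightarrow> real) topology" where
  "realization K = subtopology (powertop_real UNIV)
     {f. (\<forall>v. 0 \<le> f v) \<and> {v. f v \<noteq> 0} \<in> K \<and> sum f {v. f v \<noteq> 0} = 1}"

end

theory Submission
  imports Defs
begin

definition supp :: "('a \<Rightarrow> real) \<Rightarrow> 'a set" where "supp f = {v. f v \<noteq> 0}"

lemma topspace_real: "topspace (realization K) =
  {f. (\<forall>v. 0 \<le> f v) \<and> supp f \<in> K \<and> sum f (supp f) = 1}"
  by (simp add: realization_def supp_def)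

lemma cont_comp:
  "continuous_map (realization K) euclideanreal (\<lambda>f. f v)"
  unfolding realization_def
  by (rule continuous_map_from_subtopology) (rule continuous_map_product_projection, simp)

lemma cont_into:
  assumes "\<And>v. continuous_map X euclideanreal (\<lambda>x. g x v)"
    and "\<And>x. x \<in> topspace X \<Longrightarrow> g x \<in> topspace (realization K)"
  shows "continuous_map X (realization K) g"
  using assms unfolding realization_def
  by (auto simp: continuous_map_in_subtopology continuous_map_componentwise_UNIV)

definition HH :: "'a \<Rightarrow> 'a \<Rightarrow> real \<Rightarrow> ('a \<Rightarrow> real) \<Rightarrow> ('a \<Rightarrow> real)" where
  "HH w y t f = (\<lambda>v. f v + (if v = w then (1 - t) * f y else 0) - (if v = y then (1 - t) * f y else 0))"

lemma HH_in:
  assumes Kfin: "\<forall>\<sigma>\<in>K. finite \<sigma>"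
    and closed: "\<forall>\<sigma>\<in>K. \<forall>\<tau>. \<tau> \<subseteq> \<sigma> \<longrightarrow> \<tau> \<noteq> {} \<longrightarrow> \<tau> \<in> K"
    and wy: "w \<noteq> y"
    and dom: "\<forall>\<sigma>\<in>K. y \<in> \<sigma> \<longrightarrow> insert w \<sigma> \<in> K"
    and f: "f \<in> topspace (realization K)" and t: "0 \<le> t" "t \<le> 1"
  shows "HH w y t f \<in> topspace (realization K)"
    and "t = 0 \<Longrightarrow> y \<notin> supp (HH w y t f)"
proof -
  have f0: "\<forall>v. 0 \<le> f v" and fK: "supp f \<in> K" and f1: "sum f (supp f) = 1"
    using f by (auto simp: topspace_real)
  have "HH w y t f \<in> topspace (realization K) \<and> (t = 0 \<longrightarrow> y \<notin> supp (HH w y t f))"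
  proof (cases "f y = 0")
    case True
    then have eq: "\<And>s. HH w y s f = f" using wy by (simp add: HH_def fun_eq_iff)
    show ?thesis using f True by (simp add: eq supp_def)
  next
    case False
    have yS: "y \<in> supp f" using False by (simp add: supp_def)
    define U where "U = insert w (supp f)"
    have UK: "U \<in> K" using dom fK yS by (simp add: U_def)
    have finU: "finite U" using UK Kfin by blast
    have yU: "y \<in> U" "w \<in> U" using yS by (auto simp: U_def)
    have nn1: "0 \<le> HH w y t f v" for v
    proof -
      have a: "0 \<le> (1-t) * f y" using t f0 by simp
      have b: "f y - (1-t) * f y = t * f y" by (simp add: algebra_simps)
      have c: "0 \<le> t * f y" using t f0 by simp
      show ?thesis
      proof (cases "v = w")
        case True then show ?thesis using a f0[rule_format, of v] wy by (simp add: HH_def)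
      next
        case False then show ?thesis using b c f0[rule_format, of v] by (simp add: HH_def)
      qed
    qed
    then have nn: "\<forall>v. 0 \<le> HH w y t f v" by blast
    have sub: "supp (HH w y t f) \<subseteq> U"
      by (auto simp: supp_def HH_def U_def split: if_splits)
    have sumU: "sum (HH w y t f) U = sum f U"
      using finU yU by (simp add: HH_def sum.distrib sum_subtractf)
    have "sum f U = sum f (supp f)"
      by (rule sum.mono_neutral_right) (use finU in \<open>auto simp: U_def supp_def\<close>)
    then have sumU1: "sum (HH w y t f) U = 1" using sumU f1 by simp
    have ss: "sum (HH w y t f) (supp (HH w y t f)) = sum (HH w y t f) U"
      by (rule sum.mono_neutral_left) (use finU sub in \<open>auto simp: supp_def\<close>)
    have ne: "supp (HH w y t f) \<noteq> {}" using ss sumU1 by auto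
    have inK: "supp (HH w y t f) \<in> K" using closed UK sub ne by blast
    have "t = 0 \<longrightarrow> y \<notin> supp (HH w y t f)"
      using wy by (simp add: supp_def HH_def)
    then show ?thesis using nn inK ss sumU1 by (simp add: topspace_real)
  qed
  then show "HH w y t f \<in> topspace (realization K)" and "t = 0 \<Longrightarrow> y \<notin> supp (HH w y t f)"
    by auto
qed

lemma dom_step:
  assumes Kfin: "\<forall>\<sigma>\<in>K. finite \<sigma>"
    and closed: "\<forall>\<sigma>\<in>K. \<forall>\<tau>. \<tau> \<subseteq> \<sigma> \<longrightarrow> \<tau> \<noteq> {} \<longrightarrow> \<tau> \<in> K"
    and wy: "w \<noteq> y"
    and dom: "\<forall>\<sigma>\<in>K. y \<in> \<sigma> \<longrightarrow> insert w \<sigma> \<in> K"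
  shows "realization K homotopy_equivalent_space realization {\<sigma>\<in>K. y \<notin> \<sigma>}"
proof -
  let ?K' = "{\<sigma>\<in>K. y \<notin> \<sigma>}"
  have topK': "topspace (realization ?K') = {f \<in> topspace (realization K). y \<notin> supp f}"
    by (auto simp: topspace_real)
  let ?r = "HH w y 0"
  have HHc: "continuous_map (prod_topology (top_of_set {0..1}) (realization K)) euclideanreal
      (\<lambda>p. HH w y (fst p) (snd p) v)" for v
    unfolding HH_def
    by (intro continuous_intros continuous_map_compose[OF continuous_map_snd cont_comp, unfolded o_def]
         continuous_map_compose[OF continuous_map_fst, unfolded o_def]
         continuous_map_from_subtopology continuous_map_id[unfolded id_def])
  have rc: "continuous_map (realization K) (realization ?K') ?r"
  proof (rule cont_into)
    fix v show "continuous_map (realization K) euclideanreal (\<lambda>x. HH w y 0 x v)"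
      unfolding HH_def by (intro continuous_intros cont_comp)
  next
    fix x assume "x \<in> topspace (realization K)"
    then show "HH w y 0 x \<in> topspace (realization ?K')"
      using HH_in[OF Kfin closed wy dom, of x 0] topK' by auto
  qed
  have ic: "continuous_map (realization ?K') (realization K) id"
    by (rule cont_into) (auto simp: cont_comp topspace_real)
  have h1: "homotopic_with (\<lambda>x. True) (realization K) (realization K) (id \<circ> ?r) id"
    unfolding homotopic_with_def
  proof (intro exI conjI allI ballI)
    show "continuous_map (prod_topology (top_of_set {0..1}) (realization K)) (realization K)
        (\<lambda>p. HH w y (fst p) (snd p))"
    proof (rule cont_into)
      fix v show "continuous_map (prod_topology (top_of_set {0..1}) (realization K)) euclideanreal
        (\<lambda>p. HH w y (fst p) (snd p) v)" by (rule HHc)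
    next
      fix p assume "p \<in> topspace (prod_topology (top_of_set {0..1::real}) (realization K))"
      then show "HH w y (fst p) (snd p) \<in> topspace (realization K)"
        using HH_in(1)[OF Kfin closed wy dom] by auto
    qed
  qed (auto simp: HH_def)
  have h2: "homotopic_with (\<lambda>x. True) (realization ?K') (realization ?K') (?r \<circ> id) id"
  proof (rule homotopic_with_equal)
    show "continuous_map (realization ?K') (realization ?K') (?r \<circ> id)"
      using ic rc by (rule continuous_map_compose)
  next
    fix x assume "x \<in> topspace (realization ?K')"
    then have "x y = 0" using topK' by (auto simp: supp_def)
    then show "(?r \<circ> id) x = id x" using wy by (simp add: HH_def fun_eq_iff)
  qed simp_all
  show ?thesis unfolding homotopy_equivalent_space_def
    using rc ic h1 h2 by blast
qed

lemma chain:
  fixes \<phi> :: "'a \<Rightarrow> int"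
  assumes Kfin: "\<forall>\<sigma>\<in>K. finite \<sigma>"
    and closed: "\<forall>\<sigma>\<in>K. \<forall>\<tau>. \<tau> \<subseteq> \<sigma> \<longrightarrow> \<tau> \<noteq> {} \<longrightarrow> \<tau> \<in> K"
  shows "finite S \<Longrightarrow> G \<subseteq> S \<Longrightarrow>
    \<forall>y\<in>S-G. \<exists>w\<in>S. \<phi> w < \<phi> y \<and> (\<forall>\<sigma>\<in>K. y \<in> \<sigma> \<longrightarrow> insert w \<sigma> \<in> K) \<Longrightarrow>
    realization (induced K S) homotopy_equivalent_space realization (induced K G)"
proof (induction "card (S - G)" arbitrary: S)
  case 0
  have "S - G = {}" using "0.hyps" "0.prems"(1) by simp
  then have "S = G" using "0.prems"(2) by blast
  then show ?case by (simp add: homotopy_equivalent_space_refl)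
next
  case (Suc k)
  note finS = Suc.prems(1) and GS = Suc.prems(2) and hyp = Suc.prems(3)
  have fin: "finite (S - G)" using finS by simp
  have ne: "S - G \<noteq> {}" using Suc.hyps(2) by (metis card.empty nat.distinct(1))
  define M where "M = Max (\<phi> ` (S - G))"
  have "M \<in> \<phi> ` (S - G)" unfolding M_def using fin ne by (intro Max_in) auto
  then obtain y where yS: "y \<in> S - G" and yM: "\<phi> y = M" by auto
  have ymax: "\<forall>z\<in>S-G. \<phi> z \<le> \<phi> y" unfolding yM M_def using fin by simp
  obtain w where wS: "w \<in> S" and wl: "\<phi> w < \<phi> y" and wd: "\<forall>\<sigma>\<in>K. y \<in> \<sigma> \<longrightarrow> insert w \<sigma> \<in> K"
    using hyp yS by blast
  have st: "realization (induced K S) homotopy_equivalent_space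
      realization {\<sigma>\<in>induced K S. y \<notin> \<sigma>}"
  proof (rule dom_step)
    show "\<forall>\<sigma>\<in>induced K S. finite \<sigma>" using Kfin by (auto simp: induced_def)
    show "\<forall>\<sigma>\<in>induced K S. \<forall>\<tau>. \<tau> \<subseteq> \<sigma> \<longrightarrow> \<tau> \<noteq> {} \<longrightarrow> \<tau> \<in> induced K S"
      using closed by (auto simp: induced_def)
    show "w \<noteq> y" using wl by auto
    show "\<forall>\<sigma>\<in>induced K S. y \<in> \<sigma> \<longrightarrow> insert w \<sigma> \<in> induced K S"
      using wd wS by (auto simp: induced_def)
  qed
  have eq: "{\<sigma>\<in>induced K S. y \<notin> \<sigma>} = induced K (S - {y})" by (auto simp: induced_def)
  have ih: "realization (induced K (S - {y})) homotopy_equivalent_space realization (induced K G)"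
  proof (rule Suc.hyps(1))
    have "S - {y} - G = (S - G) - {y}" by auto
    then show "k = card (S - {y} - G)" using Suc.hyps(2) yS fin
      by (simp add: card_Diff_singleton)
    show "finite (S - {y})" using finS by simp
    show "G \<subseteq> S - {y}" using GS yS by blast
    show "\<forall>y'\<in>S - {y} - G. \<exists>w\<in>S - {y}. \<phi> w < \<phi> y' \<and> (\<forall>\<sigma>\<in>K. y' \<in> \<sigma> \<longrightarrow> insert w \<sigma> \<in> K)"
    proof
      fix y' assume y': "y' \<in> S - {y} - G"
      then obtain w' where "w' \<in> S" "\<phi> w' < \<phi> y'" "\<forall>\<sigma>\<in>K. y' \<in> \<sigma> \<longrightarrow> insert w' \<sigma> \<in> K"
        using hyp by blast
      moreover have "\<phi> y' \<le> \<phi> y" using ymax y' by auto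
      ultimately show "\<exists>w\<in>S - {y}. \<phi> w < \<phi> y' \<and> (\<forall>\<sigma>\<in>K. y' \<in> \<sigma> \<longrightarrow> insert w \<sigma> \<in> K)"
        by (intro bexI[of _ w']) fastforce+
    qed
  qed
  show ?case using homotopy_eqv_trans[OF st[unfolded eq] ih] .
qed

lemma manh_split:
  assumes "length a = n" "i < n"
  shows "manh a b = \<bar>a!i - b!i\<bar> + (\<Sum>j\<in>{..<n}-{i}. \<bar>a!j - b!j\<bar>)"
  using assms unfolding manh_def by (simp add: sum.remove)

lemma manh_sym: "length a = length b \<Longrightarrow> manh a b = manh b a"
  unfolding manh_def by (simp add: abs_minus_commute)

lemma arith_core:
  fixes a b R Ry Rz Rr :: int
  assumes "Ry + \<bar>a\<bar> \<le> R" "Rz + \<bar>b\<bar> \<le> R" "Rr \<le> Ry + Rz" "\<bar>a - b\<bar> + Rr \<le> R"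
    "R + 1 \<le> 2 * \<bar>a\<bar>"
  shows "\<bar>(a - sgn a) - b\<bar> + Rr \<le> R"
  using assms by (cases "a > 0"; cases "a < 0") (auto simp: abs_if sgn_if split: if_splits)

lemma dom_arith:
  fixes R :: int
  assumes ly: "length y = n" and lz: "length z = n" and i: "i < n"
    and big: "R + 1 \<le> 2 * \<bar>y!i\<bar>"
    and yz: "manh y z \<le> R" and y0: "manh y (replicate n 0) \<le> R" and z0: "manh z (replicate n 0) \<le> R"
  defines "w \<equiv> y[i := y!i - sgn (y!i)]"
  shows "manh w z \<le> R" "manh z w \<le> R"
    "manh w (replicate n 0) < manh y (replicate n 0)"
proof -
  have lw: "length w = n" using ly by (simp add: w_def)
  define Rr where "Rr = (\<Sum>j\<in>{..<n}-{i}. \<bar>y!j - z!j\<bar>)"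
  define Ry where "Ry = (\<Sum>j\<in>{..<n}-{i}. \<bar>y!j - replicate n 0!j\<bar>)"
  define Rz where "Rz = (\<Sum>j\<in>{..<n}-{i}. \<bar>z!j - replicate n 0!j\<bar>)"
  have Ry': "Ry = (\<Sum>j\<in>{..<n}-{i}. \<bar>y!j\<bar>)" unfolding Ry_def by (rule sum.cong) auto
  have Rz': "Rz = (\<Sum>j\<in>{..<n}-{i}. \<bar>z!j\<bar>)" unfolding Rz_def by (rule sum.cong) auto
  have "Rr \<le> (\<Sum>j\<in>{..<n}-{i}. \<bar>y!j\<bar> + \<bar>z!j\<bar>)" unfolding Rr_def
    by (rule sum_mono) (simp add: abs_triangle_ineq4)
  then have RR: "Rr \<le> Ry + Rz" by (simp add: Ry' Rz' sum.distrib)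
  have e1: "manh y z = \<bar>y!i - z!i\<bar> + Rr" unfolding Rr_def by (rule manh_split[OF ly i])
  have e2: "manh y (replicate n 0) = \<bar>y!i\<bar> + Ry" unfolding Ry_def using manh_split[OF ly i] i by simp
  have e3: "manh z (replicate n 0) = \<bar>z!i\<bar> + Rz" unfolding Rz_def using manh_split[OF lz i] i by simp
  have wi: "w!i = y!i - sgn (y!i)" using ly i by (simp add: w_def)
  have wj: "\<And>j. j \<noteq> i \<Longrightarrow> w!j = y!j" by (simp add: w_def)
  have Rw: "(\<Sum>j\<in>{..<n}-{i}. \<bar>w!j - z!j\<bar>) = Rr" unfolding Rr_def by (rule sum.cong) (auto simp: wj)
  have Rw0: "(\<Sum>j\<in>{..<n}-{i}. \<bar>w!j - replicate n 0!j\<bar>) = Ry" unfolding Ry_def by (rule sum.cong) (auto simp: wj)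
  have e4: "manh w z = \<bar>(y!i - sgn (y!i)) - z!i\<bar> + Rr" using manh_split[OF lw i, of z] Rw wi by simp
  have e5: "manh w (replicate n 0) = \<bar>y!i - sgn (y!i)\<bar> + Ry" using manh_split[OF lw i, of "replicate n 0"] Rw0 wi i by simp
  show "manh w z \<le> R" unfolding e4
    by (rule arith_core[of Ry "y!i" R Rz "z!i" Rr]) (use e1 e2 e3 yz y0 z0 RR big in auto)
  then show "manh z w \<le> R" using manh_sym lw lz by metis
  have "R \<ge> 0" using y0 unfolding manh_def by (smt (verit) sum_nonneg abs_ge_zero)
  then have "y!i \<noteq> 0" using big by auto
  then have "\<bar>y!i - sgn (y!i)\<bar> < \<bar>y!i\<bar>" using big \<open>R \<ge> 0\<close> by (auto simp: sgn_if abs_if)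
  then show "manh w (replicate n 0) < manh y (replicate n 0)" using e2 e5 by simp
qed

lemma antilex_irrefl: "\<not> antilex_less x x"
  unfolding antilex_less_def by auto

lemma antilex_trans:
  assumes "antilex_less x y" "antilex_less y z" shows "antilex_less x z"
proof -
  obtain i where i: "length x = length y" "i < length x" "x!i < y!i"
    "\<forall>j. i < j \<and> j < length x \<longrightarrow> x!j = y!j" using assms(1) unfolding antilex_less_def by blast
  obtain k where k: "length y = length z" "k < length y" "y!k < z!k"
    "\<forall>j. k < j \<and> j < length y \<longrightarrow> y!j = z!j" using assms(2) unfolding antilex_less_def by blast
  show ?thesis unfolding antilex_less_def
  proof (cases i k rule: linorder_cases)
    case less
    then show "length x = length z \<and> (\<exists>i<length x. x ! i < z ! i \<and> (\<forall>j. i < j \<and> j < length x \<longrightarrow> x ! j = z ! j))"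
      using i k by (intro conjI exI[of _ k]) auto
  next
    case equal
    then show "length x = length z \<and> (\<exists>i<length x. x ! i < z ! i \<and> (\<forall>j. i < j \<and> j < length x \<longrightarrow> x ! j = z ! j))"
      using i k by (intro conjI exI[of _ k]) auto
  next
    case greater
    then show "length x = length z \<and> (\<exists>i<length x. x ! i < z ! i \<and> (\<forall>j. i < j \<and> j < length x \<longrightarrow> x ! j = z ! j))"
      using i k by (intro conjI exI[of _ i]) auto
  qed
qed

lemma antilex_total:
  assumes "length x = length y" "x \<noteq> y"
  shows "antilex_less x y \<or> antilex_less y x"
proof -
  define D where "D = {j. j < length x \<and> x!j \<noteq> y!j}"
  have "D \<noteq> {}"
  proof
    assume "D = {}"
    then have "\<forall>j<length x. x!j = y!j" unfolding D_def by blast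
    then have "x = y" using assms(1) by (simp add: list_eq_iff_nth_eq)
    then show False using assms(2) by simp
  qed
  moreover have "finite D" unfolding D_def by simp
  ultimately have kD: "Max D \<in> D" and km: "\<forall>j\<in>D. j \<le> Max D" by (simp_all add: Max_in)
  define k where "k = Max D"
  have k: "k < length x" "x!k \<noteq> y!k" using kD by (auto simp: D_def k_def)
  have above: "\<forall>j. k < j \<and> j < length x \<longrightarrow> x!j = y!j"
  proof (intro allI impI)
    fix j assume "k < j \<and> j < length x"
    then have jk: "k < j" and jl: "j < length x" by auto
    have "j \<notin> D"
    proof
      assume "j \<in> D"
      then have "j \<le> k" using km by (simp add: k_def)
      then show False using jk by simp
    qed
    then show "x!j = y!j" using jl by (simp add: D_def)
  qed
  show ?thesis
  proof (cases "x!k < y!k")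
    case True
    have "antilex_less x y" unfolding antilex_less_def
      by (rule conjI[OF assms(1)], rule exI[of _ k]) (use k True above in simp)
    then show ?thesis ..
  next
    case False then have "y!k < x!k" using k by auto
    have "antilex_less y x" unfolding antilex_less_def
      by (rule conjI[OF assms(1)[symmetric]], rule exI[of _ k]) (use k \<open>y!k < x!k\<close> above assms(1) in auto)
    then show ?thesis ..
  qed
qed

lemma exists_min:
  assumes "finite A" "A \<noteq> {}" "\<forall>x\<in>A. length x = n"
  shows "\<exists>d\<in>A. \<forall>x\<in>A. x \<noteq> d \<longrightarrow> antilex_less d x"
  using assms
proof (induction A rule: finite_ne_induct)
  case (singleton x) then show ?case by auto
next
  case (insert a F)
  then obtain d where d: "d \<in> F" "\<forall>x\<in>F. x \<noteq> d \<longrightarrow> antilex_less d x" by auto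
  have ad: "a \<noteq> d" using d insert.hyps by auto
  show ?case
  proof (cases "antilex_less a d")
    case True
    have "\<forall>x\<in>insert a F. x \<noteq> a \<longrightarrow> antilex_less a x"
    proof (intro ballI impI)
      fix x assume "x \<in> insert a F" "x \<noteq> a"
      then have "x \<in> F" by simp
      show "antilex_less a x"
      proof (cases "x = d")
        case True then show ?thesis using \<open>antilex_less a d\<close> by simp
      next
        case False then show ?thesis using d \<open>x \<in> F\<close> antilex_trans[OF \<open>antilex_less a d\<close>] by blast
      qed
    qed
    then show ?thesis by blast
  next
    case False
    then have "antilex_less d a" using antilex_total[of d a] ad insert.prems d by auto
    then show ?thesis using d by (intro bexI[of _ d]) blast+
  qed
qed

lemma cube_finite: "finite (cube n m)"
proof (rule finite_subset)
  show "cube n m \<subseteq> {xs. set xs \<subseteq> {0..int m} \<and> length xs = n}"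
    by (auto simp: cube_def in_set_conv_nth)
  show "finite {xs. set xs \<subseteq> {0..int m} \<and> length xs = n}"
    by (rule finite_lists_length_eq) simp
qed

lemma delta_props:
  assumes "Hset n m \<alpha> \<noteq> {}"
  shows "delta n m \<alpha> \<in> Hset n m \<alpha>"
    "\<forall>x\<in>Hset n m \<alpha>. x \<noteq> delta n m \<alpha> \<longrightarrow> antilex_less (delta n m \<alpha>) x"
proof -
  have fin: "finite (Hset n m \<alpha>)" unfolding Hset_def by (rule finite_subset[OF _ cube_finite[of n m]]) blast
  have len: "\<forall>x\<in>Hset n m \<alpha>. length x = n" by (simp add: Hset_def cube_def)
  obtain d where d: "d \<in> Hset n m \<alpha>" "\<forall>x\<in>Hset n m \<alpha>. x \<noteq> d \<longrightarrow> antilex_less d x"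
    using exists_min[OF fin assms len] by blast
  have "delta n m \<alpha> = d" unfolding delta_def
  proof (rule the_equality)
    show "d \<in> Hset n m \<alpha> \<and> (\<forall>x\<in>Hset n m \<alpha>. x \<noteq> d \<longrightarrow> antilex_less d x)" using d by (rule conjI)
  next
    fix e assume e: "e \<in> Hset n m \<alpha> \<and> (\<forall>x\<in>Hset n m \<alpha>. x \<noteq> e \<longrightarrow> antilex_less e x)"
    show "e = d"
    proof (rule ccontr)
      assume "e \<noteq> d"
      have 1: "antilex_less e d" using e d(1) \<open>e \<noteq> d\<close> by simp
      have 2: "antilex_less d e" using d(2) e \<open>e \<noteq> d\<close> by simp
      note 1 = 1 2
      show False using antilex_trans[OF 1] antilex_irrefl by blast
    qed
  qed
  then show "delta n m \<alpha> \<in> Hset n m \<alpha>"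
    "\<forall>x\<in>Hset n m \<alpha>. x \<noteq> delta n m \<alpha> \<longrightarrow> antilex_less (delta n m \<alpha>) x" using d by simp_all
qed

lemma w_in_Y:
  assumes yY: "y \<in> Yset n m \<alpha>" and y0: "y \<noteq> replicate n 0" and i: "i < n"
    and big: "2 \<le> \<bar>y!i\<bar>"
  shows "y[i := y!i - sgn (y!i)] \<in> Yset n m \<alpha>"
proof -
  define d where "d = delta n m \<alpha>"
  obtain x where xH: "x \<in> Hset n m \<alpha>" and yx: "y = map2 (-) x d"
    using yY unfolding Yset_def d_def by blast
  have Hne: "Hset n m \<alpha> \<noteq> {}" using xH by blast
  have dH: "d \<in> Hset n m \<alpha>" and dmin: "\<forall>x\<in>Hset n m \<alpha>. x \<noteq> d \<longrightarrow> antilex_less d x"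
    using delta_props[OF Hne] unfolding d_def by blast+
  have lx: "length x = n" and xb: "\<forall>j<n. 0 \<le> x!j \<and> x!j \<le> int m" and xr: "\<alpha> \<le> cube_rank n m x"
    using xH by (auto simp: Hset_def cube_def)
  have ld: "length d = n" and db: "\<forall>j<n. 0 \<le> d!j \<and> d!j \<le> int m" and dr: "\<alpha> \<le> cube_rank n m d"
    using dH by (auto simp: Hset_def cube_def)
  have ly: "length y = n" using yx lx ld by simp
  have ynth: "\<And>j. j < n \<Longrightarrow> y!j = x!j - d!j" using yx lx ld by simp
  have xd: "x \<noteq> d"
  proof
    assume "x = d"
    then have "y = replicate n 0" using ly ynth by (intro nth_equalityI) auto
    then show False using y0 by simp
  qed
  then have "antilex_less d x" using dmin xH by blast
  then obtain k where k: "k < n" "d!k < x!k" "\<forall>j. k < j \<and> j < n \<longrightarrow> d!j = x!j"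
    unfolding antilex_less_def using ld by auto
  define s where "s = sgn (y!i)"
  define x' where "x' = x[i := x!i - s]"
  have lx': "length x' = n" using lx by (simp add: x'_def)
  have x'i: "x'!i = x!i - s" using lx i by (simp add: x'_def)
  have x'j: "\<And>j. j \<noteq> i \<Longrightarrow> x'!j = x!j" by (simp add: x'_def)
  have yi: "y!i = x!i - d!i" using ynth i by simp
  have eq: "y[i := y!i - sgn (y!i)] = map2 (-) x' d"
  proof (rule nth_equalityI)
    show "length (y[i := y!i - sgn (y!i)]) = length (map2 (-) x' d)" using ly lx' ld by simp
  next
    fix j assume "j < length (y[i := y!i - sgn (y!i)])"
    then have j: "j < n" using ly by simp
    show "y[i := y!i - sgn (y!i)] ! j = map2 (-) x' d ! j"
    proof (cases "j = i")
      case True then show ?thesis using j lx' ld x'i yi ly by (simp add: s_def)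
    next
      case False then show ?thesis using j lx' ld x'j ynth ly by simp
    qed
  qed
  have x'b: "\<forall>j<n. 0 \<le> x'!j \<and> x'!j \<le> int m"
  proof (intro allI impI)
    fix j assume j: "j < n"
    show "0 \<le> x'!j \<and> x'!j \<le> int m"
    proof (cases "j = i")
      case True
      have "0 \<le> x!i - s \<and> x!i - s \<le> int m"
        using xb[rule_format, OF i] db[rule_format, OF i] big yi
        by (auto simp: s_def sgn_if abs_if)
      then show ?thesis using True x'i by simp
    next
      case False then show ?thesis using xb j x'j by simp
    qed
  qed
  have x'cube: "x' \<in> cube n m" using x'b lx' by (simp add: cube_def)
  have dx': "antilex_less d x'"
  proof (cases i k rule: linorder_cases)
    case less
    show ?thesis unfolding antilex_less_def
    proof (intro conjI exI[of _ k])
      show "length d = length x'" using ld lx' by simp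
      show "k < length d" using k ld by simp
      show "d!k < x'!k" using k less x'j by simp
      show "\<forall>j. k < j \<and> j < length d \<longrightarrow> d!j = x'!j" using k less x'j ld by auto
    qed
  next
    case equal
    have "0 < y!i" using yi k equal by simp
    then have "s = 1" by (simp add: s_def)
    show ?thesis unfolding antilex_less_def
    proof (intro conjI exI[of _ k])
      show "length d = length x'" using ld lx' by simp
      show "k < length d" using k ld by simp
      show "d!k < x'!k" using equal x'i \<open>s = 1\<close> yi big \<open>0 < y!i\<close> by simp
      show "\<forall>j. k < j \<and> j < length d \<longrightarrow> d!j = x'!j" using k equal x'j ld by auto
    qed
  next
    case greater
    then have "d!i = x!i" using k i by blast
    then show ?thesis using yi big by simp
  qed
  have "cube_rank n m d \<le> cube_rank n m x'"
    unfolding cube_rank_def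
  proof (rule card_mono)
    show "finite {y \<in> cube n m. antilex_less y x'}" using cube_finite by simp
    show "{y \<in> cube n m. antilex_less y d} \<subseteq> {y \<in> cube n m. antilex_less y x'}"
      using antilex_trans[OF _ dx'] by blast
  qed
  then have "x' \<in> Hset n m \<alpha>" using x'cube dr by (simp add: Hset_def)
  then show ?thesis unfolding eq Yset_def d_def by blast
qed

lemma VR_sub: "\<sigma> \<in> VR Y R \<Longrightarrow> \<tau> \<subseteq> \<sigma> \<Longrightarrow> \<tau> \<noteq> {} \<Longrightarrow> \<tau> \<in> VR Y R"
  unfolding VR_def by (auto intro: finite_subset)

lemma VR_insert:
  assumes "T \<in> VR Y R" "w \<in> Y" "\<forall>z\<in>T. manh w z \<le> R \<and> manh z w \<le> R" "manh w w \<le> R"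
  shows "insert w T \<in> VR Y R"
  using assms unfolding VR_def by auto

lemma Gamma_fin: "\<forall>\<sigma>\<in>Gamma n m \<alpha> R. finite \<sigma>"
  by (auto simp: Gamma_def link_def VR_def)

lemma Gamma_closed: "\<forall>\<sigma>\<in>Gamma n m \<alpha> R. \<forall>\<tau>. \<tau> \<subseteq> \<sigma> \<longrightarrow> \<tau> \<noteq> {} \<longrightarrow> \<tau> \<in> Gamma n m \<alpha> R"
proof (intro ballI allI impI)
  fix \<sigma> \<tau> assume s: "\<sigma> \<in> Gamma n m \<alpha> R" and t: "\<tau> \<subseteq> \<sigma>" "\<tau> \<noteq> {}"
  have 1: "\<sigma> \<in> VR (Yset n m \<alpha>) R" "replicate n 0 \<notin> \<sigma>" "insert (replicate n 0) \<sigma> \<in> VR (Yset n m \<alpha>) R"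
    using s by (auto simp: Gamma_def link_def)
  have "\<tau> \<in> VR (Yset n m \<alpha>) R" using VR_sub[OF 1(1) t] .
  moreover have "insert (replicate n 0) \<tau> \<in> VR (Yset n m \<alpha>) R"
    using VR_sub[OF 1(3), of "insert (replicate n 0) \<tau>"] t by blast
  moreover have "replicate n 0 \<notin> \<tau>" using 1(2) t by blast
  ultimately show "\<tau> \<in> Gamma n m \<alpha> R" by (simp add: Gamma_def link_def)
qed

lemma Y_len: "y \<in> Yset n m \<alpha> \<Longrightarrow> length y = n"
proof -
  assume "y \<in> Yset n m \<alpha>"
  then obtain x where xH: "x \<in> Hset n m \<alpha>" and yx: "y = map2 (-) x (delta n m \<alpha>)"
    unfolding Yset_def by blast
  have "delta n m \<alpha> \<in> Hset n m \<alpha>" using delta_props(1) xH by blast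
  then show ?thesis using xH yx by (simp add: Hset_def cube_def)
qed

lemma Y_finite: "finite (Yset n m \<alpha>)"
  unfolding Yset_def Hset_def
  by (rule finite_imageI, rule finite_subset[OF _ cube_finite[of n m]]) blast

lemma vert_sub: "vertices (Gamma n m \<alpha> R) \<subseteq> Yset n m \<alpha>"
  by (auto simp: vertices_def Gamma_def link_def VR_def)

lemma dominate:
  fixes r :: nat
  assumes r2: "2 \<le> r" and yv: "y \<in> vertices (Gamma n m \<alpha> (int r))" and i: "i < n"
    and bad: "\<not> \<bar>y!i\<bar> \<le> int (r div 2)"
  shows "\<exists>w\<in>vertices (Gamma n m \<alpha> (int r)). manh w (replicate n 0) < manh y (replicate n 0) \<and>
    (\<forall>\<sigma>\<in>Gamma n m \<alpha> (int r). y \<in> \<sigma> \<longrightarrow> insert w \<sigma> \<in> Gamma n m \<alpha> (int r))"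
proof -
  define G where "G = Gamma n m \<alpha> (int r)"
  define Y where "Y = Yset n m \<alpha>"
  define z0 :: "int list" where "z0 = replicate n 0"
  obtain \<sigma>0 where "\<sigma>0 \<in> G" "y \<in> \<sigma>0" using yv unfolding vertices_def G_def by blast
  then have yG: "{y} \<in> G" using Gamma_closed unfolding G_def by blast
  then have yY: "y \<in> Y" and y0: "y \<noteq> z0" and yz0: "insert z0 {y} \<in> VR Y (int r)"
    by (auto simp: G_def Gamma_def link_def VR_def Y_def z0_def)
  have ly: "length y = n" using yY Y_len unfolding Y_def by blast
  have my0: "manh y z0 \<le> int r" using yz0 by (simp add: VR_def)
  have "r \<le> 2 * (r div 2) + 1" by simp
  then have "int r \<le> 2 * int (r div 2) + 1" by linarith
  then have big: "int r + 1 \<le> 2 * \<bar>y!i\<bar>" using bad by linarith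
  then have big2: "2 \<le> \<bar>y!i\<bar>" using r2 by linarith
  define w where "w = y[i := y!i - sgn (y!i)]"
  have wY: "w \<in> Y" unfolding w_def Y_def
    by (rule w_in_Y) (use yY y0 i big2 in \<open>auto simp: Y_def z0_def\<close>)
  have lw: "length w = n" using ly by (simp add: w_def)
  have wi: "w!i = y!i - sgn (y!i)" using ly i by (simp add: w_def)
  have w0: "w \<noteq> z0"
  proof
    assume "w = z0"
    then have "w!i = 0" using i by (simp add: z0_def)
    then show False using wi big2 by (auto simp: sgn_if split: if_splits)
  qed
  have mww: "manh w w \<le> int r" by (simp add: manh_def)
  have key: "manh w z \<le> int r \<and> manh z w \<le> int r" if "z \<in> Y" "manh y z \<le> int r" "manh z z0 \<le> int r" for z
  proof -
    have lz: "length z = n" using that Y_len unfolding Y_def by blast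
    show ?thesis using dom_arith[OF ly lz i, of "int r"] big that my0 unfolding w_def z0_def by simp
  qed
  have key0: "manh w z0 \<le> int r \<and> manh z0 w \<le> int r"
  proof -
    have lz: "length z0 = n" by (simp add: z0_def)
    have "manh y z0 \<le> int r" "manh z0 z0 \<le> int r" using my0 by (simp_all add: manh_def)
    then show ?thesis using dom_arith[OF ly lz i, of "int r"] big my0 unfolding w_def z0_def by simp
  qed
  have dec: "manh w z0 < manh y z0"
  proof -
    have "manh y y \<le> int r" by (simp add: manh_def)
    then show ?thesis using dom_arith(3)[OF ly ly i, of "int r"] big my0 unfolding w_def z0_def by simp
  qed
  have domi: "insert w \<sigma> \<in> G" if s: "\<sigma> \<in> G" "y \<in> \<sigma>" for \<sigma>
  proof -
    have 1: "\<sigma> \<in> VR Y (int r)" "z0 \<notin> \<sigma>" "insert z0 \<sigma> \<in> VR Y (int r)"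
      using s by (auto simp: G_def Gamma_def link_def Y_def z0_def)
    let ?T = "insert z0 \<sigma>"
    have TY: "?T \<subseteq> Y" using 1(3) by (simp add: VR_def)
    have Tp: "\<forall>a\<in>?T. \<forall>b\<in>?T. manh a b \<le> int r" using 1(3) by (simp add: VR_def)
    have allz: "\<forall>z\<in>?T. manh w z \<le> int r \<and> manh z w \<le> int r"
    proof
      fix z assume z: "z \<in> ?T"
      show "manh w z \<le> int r \<and> manh z w \<le> int r"
        by (rule key) (use z TY Tp s(2) in auto)
    qed
    have A: "insert w ?T \<in> VR Y (int r)" by (rule VR_insert[OF 1(3) wY allz mww])
    have B: "insert w \<sigma> \<in> VR Y (int r)" by (rule VR_sub[OF A]) auto
    have C: "insert z0 (insert w \<sigma>) \<in> VR Y (int r)" using A by (simp add: insert_commute)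
    show ?thesis using B C 1(2) w0 by (simp add: G_def Gamma_def link_def Y_def z0_def)
  qed
  have wv: "w \<in> vertices G" using domi[OF yG] by (auto simp: vertices_def)
  show ?thesis using wv dec domi unfolding G_def z0_def by blast
qed

theorem lemma3p3:
  fixes n m r \<alpha> :: nat
  assumes "n \<ge> 2" and "m \<ge> 1" and "r \<ge> 2"
    and "1 \<le> \<alpha>" and "\<alpha> < (m + 1) ^ n"
  shows "realization (Gamma n m \<alpha> (int r)) homotopy_equivalent_space
         realization (induced (Gamma n m \<alpha> (int r))
            {x \<in> vertices (Gamma n m \<alpha> (int r)). \<forall>i<n. \<bar>x ! i\<bar> \<le> int (r div 2)})"
proof -
  let ?K = "Gamma n m \<alpha> (int r)"
  let ?S = "vertices ?K"
  let ?G = "{x \<in> vertices (Gamma n m \<alpha> (int r)). \<forall>i<n. \<bar>x ! i\<bar> \<le> int (r div 2)}"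
  have eqK: "induced ?K ?S = ?K" by (auto simp: induced_def vertices_def)
  have finS: "finite ?S" using finite_subset[OF vert_sub Y_finite] .
  have "realization (induced ?K ?S) homotopy_equivalent_space realization (induced ?K ?G)"
  proof (rule chain[OF Gamma_fin Gamma_closed finS, where \<phi> = "\<lambda>y. manh y (replicate n 0)"])
    show "?G \<subseteq> ?S" by blast
    show "\<forall>y\<in>?S - ?G. \<exists>w\<in>?S. manh w (replicate n 0) < manh y (replicate n 0) \<and>
        (\<forall>\<sigma>\<in>?K. y \<in> \<sigma> \<longrightarrow> insert w \<sigma> \<in> ?K)"
    proof
      fix y assume y: "y \<in> ?S - ?G"
      then obtain i where "i < n" "\<not> \<bar>y!i\<bar> \<le> int (r div 2)" by blast
      then show "\<exists>w\<in>?S. manh w (replicate n 0) < manh y (replicate n 0) \<and>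
        (\<forall>\<sigma>\<in>?K. y \<in> \<sigma> \<longrightarrow> insert w \<sigma> \<in> ?K)"
        using dominate[OF assms(3)] y by blast
    qed
  qed
  then show ?thesis unfolding eqK .
qed

end
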